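(* Consider the Cannings model described in the context. For $r\in\mathbb{N}$, $k_1,\dots,k_r\ge2$ and $N>k_1+\cdots+k_r$, $$\frac{E[(\nu_{1,N})_{k_1}\cdots(\nu_{r,N})_{k_r}]}{(N)_{k_1+\cdots+k_r}}=E\Big[\frac{(X_{1,N})_{k_1}\cdots(X_{r,N})_{k_r}}{(S_N)_{k_1+\cdots+k_r}}\Big].$$ In particular, $$c_N:=\frac{E[(\nu_{1,N})_2]}{N-1}=N\,E\Big[\frac{X_{1,N}(X_{1,N}-1)}{S_N(S_N-1)}\Big].$$ Moreover, $c_N\ge\frac{\mathbb{P}(X_{1,N}\ge2)^2}{2N}$.
   Context: Cannings model with i.i.d. offspring numbers and sampling: for each $N$, let $X_{1,N},\dots,X_{N,N}$ be i.i.d. random variables with values in $\{1,2,\dots\}$ (the number of offspring of the $N$ individuals of a generation), and $S_N=X_{1,N}+\cdots+X_{N,N}$. Conditionally on these, $N$ of the $S_N$ offspring are sampled uniformly at random without replacement to form the next generation, and $\nu_{k,N}$ denotes the number of sampled offspring of the $k$th individual (so $\sum_k\nu_{k,N}=N$). This is repeated independently in each generation. $(x)_k=x(x-1)\cdots(x-k+1)$ denotes the falling factorial. *)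

theory Defs
  imports "HOL-Probability.Probability"
begin

definition ffac :: "real \<Rightarrow> nat \<Rightarrow> real" where
  "ffac x k = (\<Prod>i<k. x - real i)"

text \<open>Joint law of the offspring numbers X_{0,N},...,X_{N-1,N}: i.i.d. with law p
  (individuals are indexed 0..N-1; individual i+1 of the paper is index i).\<close>
definition offspring_pmf :: "nat pmf \<Rightarrow> nat \<Rightarrow> (nat \<Rightarrow> nat) pmf" where
  "offspring_pmf p N = Pi_pmf {..<N} 0 (\<lambda>_. p)"

definition total :: "nat \<Rightarrow> (nat \<Rightarrow> nat) \<Rightarrow> nat" where
  "total N x = (\<Sum>i<N. x i)"

definition offspring_set :: "nat \<Rightarrow> (nat \<Rightarrow> nat) \<Rightarrow> (nat \<times> nat) set" where
  "offspring_set N x = {(i, j). i < N \<and> j < x i}"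

definition sample_pmf :: "nat \<Rightarrow> (nat \<Rightarrow> nat) \<Rightarrow> (nat \<times> nat) set pmf" where
  "sample_pmf N x = pmf_of_set {A. A \<subseteq> offspring_set N x \<and> card A = N}"

definition nu :: "(nat \<times> nat) set \<Rightarrow> nat \<Rightarrow> nat" where
  "nu A i = card {j. (i, j) \<in> A}"

definition cannings_pmf :: "nat pmf \<Rightarrow> nat \<Rightarrow> ((nat \<Rightarrow> nat) \<times> (nat \<times> nat) set) pmf" where
  "cannings_pmf p N = do { x \<leftarrow> offspring_pmf p N; A \<leftarrow> sample_pmf N x; return_pmf (x, A) }"

definition cN :: "nat pmf \<Rightarrow> nat \<Rightarrow> real" where
  "cN p N = measure_pmf.expectation (cannings_pmf p N) (\<lambda>(x, A). ffac (real (nu A 0)) 2)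
            / (real N - 1)"

end

theory Submission
  imports Defs
begin


lemma ffac_Suc: "ffac x (Suc k) = x * ffac (x - 1) k"
  unfolding ffac_def by (subst prod.lessThan_Suc_shift) (simp add: algebra_simps)

lemma ffac_Suc': "ffac x (Suc k) = ffac x k * (x - real k)"
  unfolding ffac_def by (simp add: prod.lessThan_Suc)

lemma ffac_0[simp]: "ffac x 0 = 1" by (simp add: ffac_def)

lemma ffac_nat_zero: "n < k \<Longrightarrow> ffac (real n) k = 0"
  unfolding ffac_def by (rule prod_zero) (auto intro!: bexI[of _ n])

lemma ffac_nat_nonneg: "ffac (real n) k \<ge> 0"
proof (cases "n < k")
  case True thus ?thesis by (simp add: ffac_nat_zero)
next
  case False thus ?thesis unfolding ffac_def by (intro prod_nonneg) auto
qed

lemma ffac_nat_pos: "k \<le> n \<Longrightarrow> ffac (real n) k > 0"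
  unfolding ffac_def by (intro prod_pos) auto

lemma ffac_nat_mono: "n \<le> m \<Longrightarrow> ffac (real n) k \<le> ffac (real m) k"
proof (cases "n < k")
  case True thus ?thesis by (simp add: ffac_nat_zero ffac_nat_nonneg)
next
  case False
  assume "n \<le> m"
  thus ?thesis using False unfolding ffac_def by (intro prod_mono) auto
qed

lemma ffac_nat_le_pow: "ffac (real n) k \<le> real n ^ k"
proof (cases "n < k")
  case True thus ?thesis by (simp add: ffac_nat_zero)
next
  case False
  have "ffac (real n) k \<le> (\<Prod>i<k. real n)"
    unfolding ffac_def using False by (intro prod_mono) auto
  thus ?thesis by simp
qed

lemma ffac_fact: "k \<le> n \<Longrightarrow> ffac (real n) k = fact n / fact (n - k)"
proof (induction k)
  case 0 thus ?case by simp
next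
  case (Suc k)
  have "fact (n - k) = real (n - k) * fact (n - Suc k)"
    using Suc.prems by (metis Suc_diff_Suc Suc_le_lessD fact_Suc of_nat_fact)
  moreover have "real (n - k) = real n - real k" using Suc.prems by simp
  ultimately have "ffac (real n) (Suc k) = fact n / (real (n - k) * fact (n - Suc k)) * real (n - k)"
    using Suc by (simp add: ffac_Suc')
  also have "\<dots> = fact n / fact (n - Suc k)" using Suc.prems by simp
  finally show ?case .
qed

lemma choose_ffac: "k \<le> n \<Longrightarrow> real (n choose k) = ffac (real n) k / fact k"
  by (simp add: binomial_fact ffac_fact)

lemma card_distinct_lists:
  assumes "finite B"
  shows "real (card {xs. length xs = k \<and> distinct xs \<and> set xs \<subseteq> B}) = ffac (real (card B)) k"
  using assms
proof (induction k arbitrary: B)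
  case 0
  have "{xs. length xs = 0 \<and> distinct xs \<and> set xs \<subseteq> B} = {[]}" by auto
  thus ?case by simp
next
  case (Suc k)
  have eq: "{xs. length xs = Suc k \<and> distinct xs \<and> set xs \<subseteq> B} =
      (\<Union>y\<in>B. (\<lambda>xs. y # xs) ` {xs. length xs = k \<and> distinct xs \<and> set xs \<subseteq> B - {y}})"
    apply (auto simp: length_Suc_conv) by blast
  have fin: "finite {xs. length xs = k \<and> distinct xs \<and> set xs \<subseteq> B - {y}}" for y
    by (rule finite_subset[OF _ finite_lists_length_eq[OF finite_Diff[OF Suc.prems], of "{y}" k]]) auto
  have "card {xs. length xs = Suc k \<and> distinct xs \<and> set xs \<subseteq> B} =
     (\<Sum>y\<in>B. card ((\<lambda>xs. y # xs) ` {xs. length xs = k \<and> distinct xs \<and> set xs \<subseteq> B - {y}}))"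
    unfolding eq using Suc.prems fin by (intro card_UN_disjoint) auto
  also have "\<dots> = (\<Sum>y\<in>B. card {xs. length xs = k \<and> distinct xs \<and> set xs \<subseteq> B - {y}})"
    by (intro sum.cong refl card_image) (auto simp: inj_on_def)
  finally have "real (card {xs. length xs = Suc k \<and> distinct xs \<and> set xs \<subseteq> B}) =
      (\<Sum>y\<in>B. real (card {xs. length xs = k \<and> distinct xs \<and> set xs \<subseteq> B - {y}}))" by simp
  also have "\<dots> = (\<Sum>y\<in>B. ffac (real (card B) - 1) k)"
  proof (intro sum.cong refl)
    fix y assume y: "y \<in> B"
    hence "card B \<ge> 1" using Suc.prems by (metis One_nat_def Suc_leI card_gt_0_iff empty_iff)
    thus "real (card {xs. length xs = k \<and> distinct xs \<and> set xs \<subseteq> B - {y}}) = ffac (real (card B) - 1) k"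
      using y Suc by (simp add: Suc.IH card_Diff_singleton of_nat_diff)
  qed
  also have "\<dots> = ffac (real (card B)) (Suc k)" by (simp add: ffac_Suc)
  finally show ?case .
qed




definition Lst :: "(nat \<Rightarrow> nat) \<Rightarrow> (nat \<times> nat) set \<Rightarrow> nat \<Rightarrow> nat list set" where
  "Lst k B i = {xs. length xs = k i \<and> distinct xs \<and> set xs \<subseteq> {j. (i, j) \<in> B}}"

definition TT :: "nat \<Rightarrow> (nat \<Rightarrow> nat) \<Rightarrow> (nat \<times> nat) set \<Rightarrow> (nat \<Rightarrow> nat list) set" where
  "TT r k B = PiE {..<r} (Lst k B)"

definition UU :: "nat \<Rightarrow> (nat \<Rightarrow> nat list) \<Rightarrow> (nat \<times> nat) set" where
  "UU r t = (\<Union>i<r. (\<lambda>j. (i, j)) ` set (t i))"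

lemma finite_slice: "finite A \<Longrightarrow> finite {j. (i, j) \<in> A}"
  by (rule finite_subset[of _ "snd ` A"]) (force simp: image_iff)+

lemma finite_Lst: "finite B \<Longrightarrow> finite (Lst k B i)"
  unfolding Lst_def
  by (rule finite_subset[OF _ finite_lists_length_eq[OF finite_slice[of B i], of "k i"]]) auto

lemma finite_TT: "finite B \<Longrightarrow> finite (TT r k B)"
  unfolding TT_def by (intro finite_PiE finite_Lst) auto

lemma prod_ffac_card_TT:
  assumes "finite A"
  shows "(\<Prod>i<r. ffac (real (nu A i)) (k i)) = real (card (TT r k A))"
proof -
  have "real (card (TT r k A)) = (\<Prod>i<r. real (card (Lst k A i)))"
    unfolding TT_def by (simp add: card_PiE)
  also have "\<dots> = (\<Prod>i<r. ffac (real (nu A i)) (k i))"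
    unfolding Lst_def nu_def
    by (intro prod.cong refl card_distinct_lists finite_slice assms)
  finally show ?thesis by simp
qed

lemma TT_sub:
  assumes "A \<subseteq> Om"
  shows "TT r k A = {t \<in> TT r k Om. UU r t \<subseteq> A}"
  using assms unfolding TT_def UU_def Lst_def PiE_def Pi_def by (auto; blast)

lemma card_UU:
  assumes "t \<in> TT r k Om"
  shows "UU r t \<subseteq> Om" "card (UU r t) = (\<Sum>i<r. k i)"
proof -
  show "UU r t \<subseteq> Om" using assms unfolding TT_def UU_def Lst_def PiE_def Pi_def by auto
  have "card (UU r t) = (\<Sum>i<r. card ((\<lambda>j. (i, j)) ` set (t i)))"
    unfolding UU_def by (intro card_UN_disjoint) auto
  also have "\<dots> = (\<Sum>i<r. k i)"
  proof (intro sum.cong refl)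
    fix i assume "i \<in> {..<r}"
    hence "t i \<in> Lst k Om i" using assms unfolding TT_def by auto
    thus "card ((\<lambda>j. (i, j)) ` set (t i)) = k i"
      unfolding Lst_def by (subst card_image) (auto simp: inj_on_def distinct_card)
  qed
  finally show "card (UU r t) = (\<Sum>i<r. k i)" .
qed

lemma card_supsets:
  assumes "finite Om" "B \<subseteq> Om" "card B \<le> N"
  shows "card {A. A \<subseteq> Om \<and> card A = N \<and> B \<subseteq> A} = (card Om - card B) choose (N - card B)"
proof -
  have finB: "finite B" using assms finite_subset by blast
  have eq: "{A. A \<subseteq> Om \<and> card A = N \<and> B \<subseteq> A} = (\<lambda>C. C \<union> B) ` {C. C \<subseteq> Om - B \<and> card C = N - card B}"
  proof (intro equalityI subsetI)
    fix A assume A: "A \<in> {A. A \<subseteq> Om \<and> card A = N \<and> B \<subseteq> A}"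
    hence "A - B \<in> {C. C \<subseteq> Om - B \<and> card C = N - card B}"
      using finB by (auto simp: card_Diff_subset)
    moreover have "A = (A - B) \<union> B" using A by auto
    ultimately show "A \<in> (\<lambda>C. C \<union> B) ` {C. C \<subseteq> Om - B \<and> card C = N - card B}" by blast
  next
    fix A assume "A \<in> (\<lambda>C. C \<union> B) ` {C. C \<subseteq> Om - B \<and> card C = N - card B}"
    then obtain C where C: "C \<subseteq> Om - B" "card C = N - card B" "A = C \<union> B" by auto
    have "finite C" using C assms finite_subset by (metis finite_Diff)
    hence "card A = N" using C finB assms(3) by (subst C(3), subst card_Un_disjoint) auto
    thus "A \<in> {A. A \<subseteq> Om \<and> card A = N \<and> B \<subseteq> A}" using C assms by auto
  qed
  have "card {A. A \<subseteq> Om \<and> card A = N \<and> B \<subseteq> A} = card {C. C \<subseteq> Om - B \<and> card C = N - card B}"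
    unfolding eq by (intro card_image) (auto simp: inj_on_def)
  also have "\<dots> = card (Om - B) choose (N - card B)"
    using assms by (intro n_subsets) auto
  finally show ?thesis using assms finB by (simp add: card_Diff_subset)
qed




lemma choose_ratio:
  assumes "K \<le> N" "N \<le> S"
  shows "real ((S - K) choose (N - K)) / real (S choose N) = ffac (real N) K / ffac (real S) K"
proof -
  have m: "real (S choose N) * real (N choose K) = real (S choose K) * real ((S - K) choose (N - K))"
    using choose_mult[OF assms] by (metis of_nat_mult)
  have p1: "real (S choose N) > 0" "real (S choose K) > 0" using assms by auto
  have "real ((S - K) choose (N - K)) / real (S choose N) = real (N choose K) / real (S choose K)"
    using m p1 by (simp add: field_simps)
  also have "\<dots> = ffac (real N) K / ffac (real S) K"
    using assms by (simp add: choose_ffac)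
  finally show ?thesis .
qed

lemma offspring_set_Sigma: "offspring_set N x = Sigma {..<N} (\<lambda>i. {..<x i})"
  unfolding offspring_set_def by auto

lemma finite_offspring_set: "finite (offspring_set N x)"
  unfolding offspring_set_Sigma by auto

lemma card_offspring_set: "card (offspring_set N x) = total N x"
  unfolding offspring_set_Sigma total_def by (subst card_SigmaI) auto

lemma total_ge: "\<forall>i<N. x i \<ge> 1 \<Longrightarrow> total N x \<ge> N"
proof -
  assume "\<forall>i<N. x i \<ge> 1"
  hence "(\<Sum>i<N. (1::nat)) \<le> (\<Sum>i<N. x i)" by (intro sum_mono) auto
  thus ?thesis by (simp add: total_def)
qed

lemma sample_expect:
  assumes xpos: "\<forall>i<N. x i \<ge> 1" and rN: "r \<le> N" and KN: "(\<Sum>i<r. k i) \<le> N"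
  shows "measure_pmf.expectation (sample_pmf N x) (\<lambda>A. \<Prod>i<r. ffac (real (nu A i)) (k i))
     = ffac (real N) (\<Sum>i<r. k i) * (\<Prod>i<r. ffac (real (x i)) (k i)) / ffac (real (total N x)) (\<Sum>i<r. k i)"
proof -
  define Om where "Om = offspring_set N x"
  define S where "S = total N x"
  define K where "K = (\<Sum>i<r. k i)"
  define AA where "AA = {A. A \<subseteq> Om \<and> card A = N}"
  define C where "C = (S - K) choose (N - K)"
  have finOm: "finite Om" unfolding Om_def by (rule finite_offspring_set)
  have cardOm: "card Om = S" unfolding Om_def S_def by (rule card_offspring_set)
  have SN: "S \<ge> N" unfolding S_def using xpos by (rule total_ge)
  have finAA: "finite AA" unfolding AA_def
    by (rule finite_subset[of _ "Pow Om"]) (use finOm in auto)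
  have neAA: "AA \<noteq> {}"
  proof -
    obtain T where "T \<subseteq> Om" "card T = N" using obtain_subset_with_card_n[of N Om] SN cardOm by auto
    thus ?thesis unfolding AA_def by auto
  qed
  have cardAA: "card AA = S choose N" unfolding AA_def using finOm cardOm by (simp add: n_subsets)
  have finT: "finite (TT r k Om)" using finOm by (rule finite_TT)
  have "measure_pmf.expectation (sample_pmf N x) (\<lambda>A. \<Prod>i<r. ffac (real (nu A i)) (k i))
      = (\<Sum>A\<in>AA. \<Prod>i<r. ffac (real (nu A i)) (k i)) / card AA"
    unfolding sample_pmf_def AA_def[symmetric] Om_def[symmetric]
    by (rule integral_pmf_of_set[OF neAA finAA])
  also have "(\<Sum>A\<in>AA. \<Prod>i<r. ffac (real (nu A i)) (k i)) = (\<Sum>A\<in>AA. real (card (TT r k A)))"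
    by (intro sum.cong refl prod_ffac_card_TT) (auto simp: AA_def intro: finite_subset[OF _ finOm])
  also have "\<dots> = (\<Sum>A\<in>AA. \<Sum>t\<in>TT r k Om. if UU r t \<subseteq> A then 1 else 0)"
  proof (intro sum.cong refl)
    fix A assume "A \<in> AA"
    hence "A \<subseteq> Om" by (simp add: AA_def)
    hence "card (TT r k A) = card {t \<in> TT r k Om. UU r t \<subseteq> A}" by (simp add: TT_sub)
    also have "real \<dots> = (\<Sum>t\<in>TT r k Om. if UU r t \<subseteq> A then 1 else 0)"
      using finT by (simp add: sum.If_cases Int_def conj_commute)
    finally show "real (card (TT r k A)) = (\<Sum>t\<in>TT r k Om. if UU r t \<subseteq> A then 1 else 0)" .
  qed
  also have "\<dots> = (\<Sum>t\<in>TT r k Om. \<Sum>A\<in>AA. if UU r t \<subseteq> A then 1 else 0)"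
    by (rule sum.swap)
  also have "\<dots> = (\<Sum>t\<in>TT r k Om. real C)"
  proof (intro sum.cong refl)
    fix t assume t: "t \<in> TT r k Om"
    have "(\<Sum>A\<in>AA. if UU r t \<subseteq> A then 1 else 0) = real (card {A \<in> AA. UU r t \<subseteq> A})"
      using finAA by (simp add: sum.If_cases Int_def conj_commute)
    also have "{A \<in> AA. UU r t \<subseteq> A} = {A. A \<subseteq> Om \<and> card A = N \<and> UU r t \<subseteq> A}"
      unfolding AA_def by auto
    also have "card \<dots> = C"
      unfolding C_def using card_UU[OF t] finOm cardOm KN
      by (subst card_supsets) (auto simp: K_def)
    finally show "(\<Sum>A\<in>AA. if UU r t \<subseteq> A then 1 else 0) = real C" .
  qed
  also have "\<dots> = real (card (TT r k Om)) * real C" by simp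
  also have "real (card (TT r k Om)) = (\<Prod>i<r. ffac (real (nu Om i)) (k i))"
    using prod_ffac_card_TT[OF finOm] by simp
  also have "\<dots> = (\<Prod>i<r. ffac (real (x i)) (k i))"
  proof (intro prod.cong refl)
    fix i assume "i \<in> {..<r}"
    hence "i < N" using rN by auto
    hence "{j. (i, j) \<in> Om} = {..<x i}" unfolding Om_def offspring_set_def by auto
    thus "ffac (real (nu Om i)) (k i) = ffac (real (x i)) (k i)" by (simp add: nu_def)
  qed
  finally have "measure_pmf.expectation (sample_pmf N x) (\<lambda>A. \<Prod>i<r. ffac (real (nu A i)) (k i))
     = (\<Prod>i<r. ffac (real (x i)) (k i)) * (real C / real (S choose N))"
    by (simp add: cardAA)
  also have "real C / real (S choose N) = ffac (real N) K / ffac (real S) K"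
    unfolding C_def using KN SN by (intro choose_ratio) (auto simp: K_def)
  finally show ?thesis by (simp add: K_def S_def)
qed




lemma expectation_bind_nonneg:
  fixes f :: "'b \<Rightarrow> real"
  assumes nn: "\<And>y. 0 \<le> f y"
    and int: "\<And>x. x \<in> set_pmf M \<Longrightarrow> integrable (measure_pmf (F x)) f"
  shows "measure_pmf.expectation (bind_pmf M F) f = measure_pmf.expectation M (\<lambda>x. measure_pmf.expectation (F x) f)"
proof -
  have "measure_pmf.expectation (bind_pmf M F) f = enn2real (\<integral>\<^sup>+y. ennreal (f y) \<partial>bind_pmf M F)"
    using nn by (intro integral_eq_nn_integral) auto
  also have "(\<integral>\<^sup>+y. ennreal (f y) \<partial>bind_pmf M F) = (\<integral>\<^sup>+x. \<integral>\<^sup>+y. ennreal (f y) \<partial>F x \<partial>M)"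
    by simp
  also have "\<dots> = (\<integral>\<^sup>+x. ennreal (measure_pmf.expectation (F x) f) \<partial>M)"
    using int nn by (intro nn_integral_cong_AE) (auto simp: AE_measure_pmf_iff intro!: nn_integral_eq_integral)
  also have "enn2real \<dots> = measure_pmf.expectation M (\<lambda>x. measure_pmf.expectation (F x) f)"
    using nn by (intro integral_eq_nn_integral[symmetric]) (auto intro!: integral_nonneg_AE)
  finally show ?thesis .
qed

lemma integrable_pmf_bounded:
  fixes f :: "'a \<Rightarrow> real"
  assumes "\<And>x. x \<in> set_pmf M \<Longrightarrow> \<bar>f x\<bar> \<le> B"
  shows "integrable (measure_pmf M) f"
  by (rule measure_pmf.integrable_const_bound[where B=B]) (use assms in \<open>auto simp: AE_measure_pmf_iff\<close>)

lemma set_offspring_pmf: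
  assumes "x \<in> set_pmf (offspring_pmf p N)"
  shows "\<And>i. i < N \<Longrightarrow> x i \<in> set_pmf p" "\<And>i. i \<ge> N \<Longrightarrow> x i = 0"
  using assms unfolding offspring_pmf_def by (auto simp: set_Pi_pmf PiE_dflt_def)

lemma cannings_bind: "cannings_pmf p N = bind_pmf (offspring_pmf p N) (\<lambda>x. map_pmf (\<lambda>A. (x, A)) (sample_pmf N x))"
  unfolding cannings_pmf_def by (simp add: map_pmf_def)

lemma finite_sample_support:
  assumes "\<forall>i<N. x i \<ge> 1"
  shows "finite (set_pmf (sample_pmf N x))"
proof -
  have fin: "finite {A. A \<subseteq> offspring_set N x \<and> card A = N}"
    by (rule finite_subset[of _ "Pow (offspring_set N x)"]) (use finite_offspring_set in auto)
  obtain T where "T \<subseteq> offspring_set N x" "card T = N"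
    using obtain_subset_with_card_n[of N "offspring_set N x"] total_ge[OF assms] card_offspring_set by metis
  hence "{A. A \<subseteq> offspring_set N x \<and> card A = N} \<noteq> {}" by auto
  thus ?thesis unfolding sample_pmf_def using fin by simp
qed

lemma offspring_pos:
  assumes pos: "set_pmf p \<subseteq> {1..}" and x: "x \<in> set_pmf (offspring_pmf p N)"
  shows "\<forall>i<N. x i \<ge> 1"
  using set_offspring_pmf(1)[OF x] pos by auto




lemma part1:
  fixes p :: "nat pmf" and N r :: nat and k :: "nat \<Rightarrow> nat"
  assumes pos: "set_pmf p \<subseteq> {1..}" and k2: "\<forall>i<r. k i \<ge> 2" and KN: "N > (\<Sum>i<r. k i)"
  shows "measure_pmf.expectation (cannings_pmf p N)
              (\<lambda>(x, A). \<Prod>i<r. ffac (real (nu A i)) (k i))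
            / ffac (real N) (\<Sum>i<r. k i)
          = measure_pmf.expectation (offspring_pmf p N)
              (\<lambda>x. (\<Prod>i<r. ffac (real (x i)) (k i)) / ffac (real (total N x)) (\<Sum>i<r. k i))"
proof -
  define K where "K = (\<Sum>i<r. k i)"
  have "(\<Sum>i<r. (1::nat)) \<le> K" unfolding K_def using k2 by (intro sum_mono) auto
  hence rN: "r \<le> N" using KN by (simp add: K_def)
  have nn: "0 \<le> (\<lambda>(x, A). \<Prod>i<r. ffac (real (nu A i)) (k i)) y" for y
    by (auto simp: case_prod_beta intro!: prod_nonneg ffac_nat_nonneg)
  have "measure_pmf.expectation (cannings_pmf p N) (\<lambda>(x, A). \<Prod>i<r. ffac (real (nu A i)) (k i))
     = measure_pmf.expectation (offspring_pmf p N) (\<lambda>x. measure_pmf.expectation (map_pmf (\<lambda>A. (x, A)) (sample_pmf N x))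
          (\<lambda>(x, A). \<Prod>i<r. ffac (real (nu A i)) (k i)))"
    unfolding cannings_bind
    by (rule expectation_bind_nonneg[OF nn]) (auto intro!: integrable_measure_pmf_finite finite_sample_support offspring_pos[OF pos])
  also have "\<dots> = measure_pmf.expectation (offspring_pmf p N)
       (\<lambda>x. ffac (real N) K * ((\<Prod>i<r. ffac (real (x i)) (k i)) / ffac (real (total N x)) K))"
  proof (intro integral_cong_AE)
    show "AE x in measure_pmf (offspring_pmf p N). measure_pmf.expectation (map_pmf (\<lambda>A. (x, A)) (sample_pmf N x))
          (\<lambda>(x, A). \<Prod>i<r. ffac (real (nu A i)) (k i)) = ffac (real N) K * ((\<Prod>i<r. ffac (real (x i)) (k i)) / ffac (real (total N x)) K)"
      unfolding AE_measure_pmf_iff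
    proof safe
      fix x assume x: "x \<in> set_pmf (offspring_pmf p N)"
      have "measure_pmf.expectation (map_pmf (\<lambda>A. (x, A)) (sample_pmf N x))
          (\<lambda>(x, A). \<Prod>i<r. ffac (real (nu A i)) (k i)) =
          measure_pmf.expectation (sample_pmf N x) (\<lambda>A. \<Prod>i<r. ffac (real (nu A i)) (k i))"
        by simp
      also have "\<dots> = ffac (real N) K * (\<Prod>i<r. ffac (real (x i)) (k i)) / ffac (real (total N x)) K"
        unfolding K_def using offspring_pos[OF pos x] rN KN by (intro sample_expect) auto
      finally show "measure_pmf.expectation (map_pmf (\<lambda>A. (x, A)) (sample_pmf N x))
          (\<lambda>(x, A). \<Prod>i<r. ffac (real (nu A i)) (k i)) = ffac (real N) K * ((\<Prod>i<r. ffac (real (x i)) (k i)) / ffac (real (total N x)) K)"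
        by simp
    qed
  qed auto
  also have "\<dots> = ffac (real N) K * measure_pmf.expectation (offspring_pmf p N)
       (\<lambda>x. (\<Prod>i<r. ffac (real (x i)) (k i)) / ffac (real (total N x)) K)"
    by (rule integral_mult_right_zero)
  finally show ?thesis
    using ffac_nat_pos[of K N] KN by (simp add: K_def)
qed




lemma ffac_2: "ffac y 2 = y * (y - 1)"
  unfolding ffac_def by (simp add: eval_nat_numeral)

lemma part2:
  fixes p :: "nat pmf" and N :: nat
  assumes pos: "set_pmf p \<subseteq> {1..}" and N2: "N > 2"
  shows "cN p N = real N * measure_pmf.expectation (offspring_pmf p N)
              (\<lambda>x. real (x 0) * (real (x 0) - 1) / (real (total N x) * (real (total N x) - 1)))"
proof -
  have h2: "measure_pmf.expectation (cannings_pmf p N) (\<lambda>(x, A). ffac (real (nu A 0)) 2)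
      / (real N * (real N - 1)) = measure_pmf.expectation (offspring_pmf p N)
              (\<lambda>x. real (x 0) * (real (x 0) - 1) / (real (total N x) * (real (total N x) - 1)))"
    using part1[OF pos, of 1 "\<lambda>_. 2"] N2 by (simp add: ffac_2 lessThan_Suc)
  have "real N * (real N - 1) \<noteq> 0" "real N \<noteq> 0" using N2 by auto
  thus ?thesis unfolding cN_def h2[symmetric] by (simp add: field_simps)
qed




lemma expectation_01:
  fixes f :: "'a \<Rightarrow> real"
  assumes "\<And>x. x \<in> set_pmf M \<Longrightarrow> 0 \<le> f x \<and> f x \<le> 1"
  shows "integrable (measure_pmf M) f" "0 \<le> measure_pmf.expectation M f" "measure_pmf.expectation M f \<le> 1"
proof -
  show i: "integrable (measure_pmf M) f"
    by (rule integrable_pmf_bounded[where B=1]) (use assms in force)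
  show "0 \<le> measure_pmf.expectation M f"
    using assms by (intro integral_nonneg_AE) (auto simp: AE_measure_pmf_iff)
  show "measure_pmf.expectation M f \<le> 1"
    using assms i by (intro measure_pmf.integral_le_const) (auto simp: AE_measure_pmf_iff)
qed

lemma phi_mono: "(s::real) > 0 \<Longrightarrow> 0 \<le> a \<Longrightarrow> a \<le> b \<Longrightarrow> a / (a + s) \<le> b / (b + s)"
  by (simp add: divide_simps) (simp add: algebra_simps mult_right_mono)

lemma inner_ineq:
  fixes p :: "nat pmf" and s :: real
  assumes pos: "set_pmf p \<subseteq> {1..}" and s: "s > 0"
  shows "measure_pmf.expectation p (\<lambda>y. indicator {2..} y * (real y / (real y + s)))
     \<ge> measure_pmf.prob p {2..} * measure_pmf.expectation p (\<lambda>y. real y / (real y + s))"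
proof -
  define \<phi> where "\<phi> = (\<lambda>y::nat. real y / (real y + s))"
  define q where "q = measure_pmf.prob p {2..}"
  define a where "a = measure_pmf.expectation p (\<lambda>y. indicator {2..} y * \<phi> y)"
  define b where "b = measure_pmf.expectation p \<phi>"
  have phi01: "0 \<le> \<phi> y \<and> \<phi> y \<le> 1" for y unfolding \<phi>_def using s by (auto simp: divide_simps)
  have int1: "integrable (measure_pmf p) \<phi>" using phi01 by (intro expectation_01) auto
  have int2: "integrable (measure_pmf p) (\<lambda>y. indicator {2..} y * \<phi> y)"
    using phi01 by (intro expectation_01) (auto simp: indicator_def)
  have int3: "integrable (measure_pmf p) (\<lambda>y. (1 - indicator {2..} y) * \<phi> y)"
    using phi01 by (intro expectation_01) (auto simp: indicator_def)
  have Eg: "measure_pmf.expectation p (indicator {2..} :: nat \<Rightarrow> real) = q"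
    unfolding q_def by simp
  have q01: "0 \<le> q" "q \<le> 1" unfolding q_def by auto
  have "a \<ge> measure_pmf.expectation p (\<lambda>y. indicator {2..} y * \<phi> 2)"
    unfolding a_def
  proof (intro integral_mono_AE int2)
    have "integrable (measure_pmf p) (indicator {2..} :: nat \<Rightarrow> real)"
      by (intro expectation_01) (auto simp: indicator_def)
    thus "integrable (measure_pmf p) (\<lambda>y. indicator {2..} y * \<phi> 2)" by simp
    show "AE y in measure_pmf p. indicator {2..} y * \<phi> 2 \<le> indicator {2..} y * \<phi> y"
      by (intro AE_I2) (auto simp: indicator_def \<phi>_def intro!: phi_mono s)
  qed
  hence a1: "a \<ge> q * \<phi> 2" using Eg by simp
  have "measure_pmf.expectation p (\<lambda>y. (1 - indicator {2..} y) * \<phi> y)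
      \<le> measure_pmf.expectation p (\<lambda>y. (1 - indicator {2..} y) * \<phi> 2)"
  proof (intro integral_mono_AE int3)
    have "integrable (measure_pmf p) (\<lambda>y. 1 - indicator {2..} y :: real)"
      by (intro expectation_01) (auto simp: indicator_def)
    thus "integrable (measure_pmf p) (\<lambda>y. (1 - indicator {2..} y) * \<phi> 2)" by simp
    show "AE y in measure_pmf p. (1 - indicator {2..} y) * \<phi> y \<le> (1 - indicator {2..} y) * \<phi> 2"
      unfolding AE_measure_pmf_iff
    proof safe
      fix y assume "y \<in> set_pmf p"
      hence "y \<ge> 1" using pos by auto
      thus "(1 - indicator {2..} y) * \<phi> y \<le> (1 - indicator {2..} y) * \<phi> 2"
        by (cases "y \<ge> 2") (auto simp: indicator_def \<phi>_def intro!: phi_mono s)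
    qed
  qed
  also have "\<dots> = measure_pmf.expectation p (\<lambda>y. 1 - indicator {2..} y) * \<phi> 2"
    by (rule integral_mult_left_zero)
  also have "measure_pmf.expectation p (\<lambda>y. 1 - indicator {2..} y :: real) = 1 - q"
  proof -
    have "integrable (measure_pmf p) (indicator {2..} :: nat \<Rightarrow> real)"
      by (intro expectation_01) (auto simp: indicator_def)
    hence "measure_pmf.expectation p (\<lambda>y. 1 - indicator {2..} y :: real) =
        measure_pmf.expectation p (\<lambda>y. 1) - measure_pmf.expectation p (indicator {2..} :: nat \<Rightarrow> real)"
      by (intro Bochner_Integration.integral_diff) auto
    thus ?thesis using Eg by simp
  qed
  finally have c1: "measure_pmf.expectation p (\<lambda>y. (1 - indicator {2..} y) * \<phi> y) \<le> (1 - q) * \<phi> 2" .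
  have "b = a + measure_pmf.expectation p (\<lambda>y. (1 - indicator {2..} y) * \<phi> y)"
    unfolding a_def b_def by (subst Bochner_Integration.integral_add[OF int2 int3, symmetric]) (simp add: algebra_simps)
  hence "b \<le> a + (1 - q) * \<phi> 2" using c1 by simp
  hence "q * b \<le> q * (a + (1 - q) * \<phi> 2)" using q01 by (intro mult_left_mono) auto
  hence "q * b \<le> q * a + (1 - q) * (q * \<phi> 2)" by (simp add: algebra_simps)
  also have "\<dots> \<le> q * a + (1 - q) * a" using a1 q01 by (intro add_left_mono mult_left_mono) auto
  finally have "q * b \<le> a" by (simp add: algebra_simps)
  thus ?thesis unfolding a_def b_def q_def \<phi>_def by simp
qed

lemma real_ineq:
  fixes a S :: real
  assumes "2 \<le> a" "3 \<le> S" "a \<le> S"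
  shows "(a / S)^2 / 2 \<le> a * (a - 1) / (S * (S - 1))"
proof -
  have "a^2 * (S * (S - 1)) \<le> 2 * (a * (a - 1)) * S^2"
  proof -
    have "0 \<le> S * (a - 2) + a" using assms by simp
    hence "a * (S - 1) \<le> 2 * (a - 1) * S" by (simp add: algebra_simps)
    hence "a * (a * (S - 1)) * S \<le> a * (2 * (a - 1) * S) * S"
      using assms by (intro mult_right_mono mult_left_mono) auto
    thus ?thesis by (simp add: power2_eq_square algebra_simps)
  qed
  thus ?thesis using assms by (simp add: divide_simps power2_eq_square)
qed




lemma offspring_swap:
  fixes F :: "nat \<Rightarrow> nat \<Rightarrow> real"
  assumes i: "i < N"
  shows "measure_pmf.expectation (offspring_pmf p N) (\<lambda>x. F (x i) (total N x))
       = measure_pmf.expectation (offspring_pmf p N) (\<lambda>x. F (x 0) (total N x))"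
proof -
  define h where "h = (\<lambda>j::nat. if j = 0 then i else if j = i then 0 else j)"
  have bij: "bij_betw h {..<N} {..<N}"
    by (rule bij_betwI[where g=h]) (use i in \<open>auto simp: h_def\<close>)
  have eq: "Pi_pmf {..<N} 0 (\<lambda>_. p) = map_pmf (\<lambda>g. g \<circ> h) (Pi_pmf {..<N} 0 (\<lambda>_. p))"
    by (rule Pi_pmf_bij_betw) (use bij i in \<open>auto simp: h_def\<close>)
  have tot: "total N (g \<circ> h) = total N g" for g
    unfolding total_def using sum.reindex_bij_betw[OF bij, of g] by simp
  have "measure_pmf.expectation (offspring_pmf p N) (\<lambda>x. F (x 0) (total N x))
      = measure_pmf.expectation (map_pmf (\<lambda>g. g \<circ> h) (Pi_pmf {..<N} 0 (\<lambda>_. p))) (\<lambda>x. F (x 0) (total N x))"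
    unfolding offspring_pmf_def using eq by simp
  also have "\<dots> = measure_pmf.expectation (offspring_pmf p N) (\<lambda>x. F (x i) (total N x))"
    unfolding offspring_pmf_def by (simp add: tot) (simp add: h_def)
  finally show ?thesis by simp
qed

lemma offspring_decomp:
  assumes "N > 0"
  shows "offspring_pmf p N = bind_pmf (Pi_pmf {1..<N} 0 (\<lambda>_. p)) (\<lambda>f. map_pmf (\<lambda>y. f(0 := y)) p)"
proof -
  have "{..<N} = insert 0 {1..<N}" using assms by auto
  hence "offspring_pmf p N = Pi_pmf (insert 0 {1..<N}) 0 (\<lambda>_. p)" by (simp add: offspring_pmf_def)
  also have "\<dots> = do {y \<leftarrow> p; f \<leftarrow> Pi_pmf {1..<N} 0 (\<lambda>_. p); return_pmf (f(0 := y))}"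
    by (rule Pi_pmf_insert') auto
  also have "\<dots> = bind_pmf (Pi_pmf {1..<N} 0 (\<lambda>_. p)) (\<lambda>f. map_pmf (\<lambda>y. f(0 := y)) p)"
    by (subst bind_commute_pmf) (simp add: map_pmf_def)
  finally show ?thesis .
qed

lemma total_upd:
  assumes "N > 0"
  shows "total N (f(0 := y)) = y + (\<Sum>j\<in>{1..<N}. f j)"
proof -
  have "{..<N} = insert 0 {1..<N}" using assms by auto
  thus ?thesis unfolding total_def by (simp add: sum.insert)
qed

lemma Z_bounds:
  assumes "i < N"
  shows "0 \<le> real (x i) / real (total N x) \<and> real (x i) / real (total N x) \<le> 1"
proof -
  have "x i \<le> total N x" unfolding total_def using assms by (intro member_le_sum) auto
  thus ?thesis by (cases "total N x = 0") (auto simp: divide_simps)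
qed

lemma EZ:
  assumes pos: "set_pmf p \<subseteq> {1..}" and N: "N > 0"
  shows "measure_pmf.expectation (offspring_pmf p N) (\<lambda>x. real (x 0) / real (total N x)) = 1 / real N"
proof -
  let ?M = "offspring_pmf p N"
  have "(\<Sum>i<N. measure_pmf.expectation ?M (\<lambda>x. real (x i) / real (total N x)))
      = measure_pmf.expectation ?M (\<lambda>x. \<Sum>i<N. real (x i) / real (total N x))"
    by (rule Bochner_Integration.integral_sum[symmetric]) (intro expectation_01 Z_bounds, simp)
  also have "\<dots> = measure_pmf.expectation ?M (\<lambda>x. 1)"
  proof (intro integral_cong_AE)
    show "AE x in measure_pmf ?M. (\<Sum>i<N. real (x i) / real (total N x)) = 1"
      unfolding AE_measure_pmf_iff
    proof safe
      fix x assume x: "x \<in> set_pmf ?M"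
      have "total N x \<ge> N" using offspring_pos[OF pos x] by (rule total_ge)
      hence "real (total N x) > 0" using N by simp
      thus "(\<Sum>i<N. real (x i) / real (total N x)) = 1"
        by (simp add: sum_divide_distrib[symmetric] total_def)
    qed
  qed auto
  finally have "(\<Sum>i<N. measure_pmf.expectation ?M (\<lambda>x. real (x i) / real (total N x))) = 1" by simp
  moreover have "(\<Sum>i<N. measure_pmf.expectation ?M (\<lambda>x. real (x i) / real (total N x)))
      = real N * measure_pmf.expectation ?M (\<lambda>x. real (x 0) / real (total N x))"
  proof -
    note sw = offspring_swap[where F="\<lambda>a b. real a / real b" and p=p and N=N]
    have "(\<Sum>i<N. measure_pmf.expectation ?M (\<lambda>x. real (x i) / real (total N x)))
       = (\<Sum>i<N. measure_pmf.expectation ?M (\<lambda>x. real (x 0) / real (total N x)))"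
      by (intro sum.cong refl sw) simp
    thus ?thesis by simp
  qed
  ultimately show ?thesis using N by (simp add: field_simps)
qed




lemma decomp_expect:
  fixes G :: "(nat \<Rightarrow> nat) \<Rightarrow> real"
  assumes N: "N > 0" and G: "\<And>x. 0 \<le> G x \<and> G x \<le> 1"
  shows "measure_pmf.expectation (offspring_pmf p N) G
     = measure_pmf.expectation (Pi_pmf {1..<N} 0 (\<lambda>_. p)) (\<lambda>f. measure_pmf.expectation p (\<lambda>y. G (f(0 := y))))"
proof -
  have "measure_pmf.expectation (offspring_pmf p N) G
     = measure_pmf.expectation (Pi_pmf {1..<N} 0 (\<lambda>_. p)) (\<lambda>f. measure_pmf.expectation (map_pmf (\<lambda>y. f(0 := y)) p) G)"
    unfolding offspring_decomp[OF N]
    by (rule expectation_bind_nonneg) (use G in \<open>auto intro!: expectation_01\<close>)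
  thus ?thesis by simp
qed

lemma part3:
  fixes p :: "nat pmf" and N :: nat
  assumes pos: "set_pmf p \<subseteq> {1..}" and N2: "N > 2"
  shows "cN p N \<ge> (measure_pmf.prob p {2..})\<^sup>2 / (2 * real N)"
proof -
  let ?M = "offspring_pmf p N"
  let ?P = "Pi_pmf {1..<N} 0 (\<lambda>_. p)"
  define q where "q = measure_pmf.prob p {2..}"
  define Z where "Z = (\<lambda>x::nat\<Rightarrow>nat. real (x 0) / real (total N x))"
  define W where "W = (\<lambda>x::nat\<Rightarrow>nat. indicator {2..} (x 0) * Z x)"
  define L where "L = (\<lambda>x::nat\<Rightarrow>nat. real (x 0) * (real (x 0) - 1) / (real (total N x) * (real (total N x) - 1)))"
  have N0: "N > 0" using N2 by simp
  have Z01: "0 \<le> Z x \<and> Z x \<le> 1" for x unfolding Z_def using Z_bounds[OF N0] by simp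
  have W01: "0 \<le> W x \<and> W x \<le> 1" for x using Z01[of x] unfolding W_def by (auto simp: indicator_def)
  define s where "s = (\<lambda>f::nat\<Rightarrow>nat. real (\<Sum>j\<in>{1..<N}. f j))"
  have Zu: "Z (f(0 := y)) = real y / (real y + s f)" for f y
    unfolding Z_def s_def by (simp add: total_upd[OF N0])
  have Wu: "W (f(0 := y)) = indicator {2..} y * (real y / (real y + s f))" for f y
    unfolding W_def by (simp add: Zu)
  have spos: "s f > 0" if f: "f \<in> set_pmf ?P" for f
  proof -
    have "f 1 \<in> set_pmf p" using f N2 by (auto simp: set_Pi_pmf PiE_dflt_def)
    hence "f 1 \<ge> 1" using pos by auto
    moreover have "f 1 \<le> (\<Sum>j\<in>{1..<N}. f j)" using N2 by (intro member_le_sum) auto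
    ultimately have "(\<Sum>j\<in>{1..<N}. f j) > 0" by linarith
    thus ?thesis unfolding s_def of_nat_0_less_iff .
  qed
  have innerW01: "0 \<le> measure_pmf.expectation p (\<lambda>y. W (f(0 := y))) \<and> measure_pmf.expectation p (\<lambda>y. W (f(0 := y))) \<le> 1" for f
    using W01 by (simp add: expectation_01)
  have innerZ01: "0 \<le> measure_pmf.expectation p (\<lambda>y. Z (f(0 := y))) \<and> measure_pmf.expectation p (\<lambda>y. Z (f(0 := y))) \<le> 1" for f
    using Z01 by (simp add: expectation_01)
  have EW: "measure_pmf.expectation ?M W \<ge> q * measure_pmf.expectation ?M Z"
  proof -
    have "q * measure_pmf.expectation ?M Z = measure_pmf.expectation ?P (\<lambda>f. q * measure_pmf.expectation p (\<lambda>y. Z (f(0 := y))))"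
      using decomp_expect[OF N0 Z01] by simp
    also have "\<dots> \<le> measure_pmf.expectation ?P (\<lambda>f. measure_pmf.expectation p (\<lambda>y. W (f(0 := y))))"
    proof (intro integral_mono_AE)
      show "integrable (measure_pmf ?P) (\<lambda>f. q * measure_pmf.expectation p (\<lambda>y. Z (f(0 := y))))"
        using innerZ01 by (intro integrable_mult_right) (simp add: expectation_01)
      show "integrable (measure_pmf ?P) (\<lambda>f. measure_pmf.expectation p (\<lambda>y. W (f(0 := y))))"
        using innerW01 by (simp add: expectation_01)
      show "AE f in measure_pmf ?P. q * measure_pmf.expectation p (\<lambda>y. Z (f(0 := y)))
             \<le> measure_pmf.expectation p (\<lambda>y. W (f(0 := y)))"
        unfolding AE_measure_pmf_iff Zu Wu q_def using inner_ineq[OF pos spos] by blast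
    qed
    also have "\<dots> = measure_pmf.expectation ?M W"
      using decomp_expect[OF N0 W01] by simp
    finally show ?thesis .
  qed
  have EZ': "measure_pmf.expectation ?M Z = 1 / real N" unfolding Z_def by (rule EZ[OF pos N0])
  have q0: "q \<ge> 0" unfolding q_def by simp
  have EWq: "measure_pmf.expectation ?M W \<ge> q / real N" using EW EZ' by simp
  have intW: "integrable (measure_pmf ?M) W" using W01 by (simp add: expectation_01)
  have intW2: "integrable (measure_pmf ?M) (\<lambda>x. (W x)\<^sup>2)"
    using W01 by (intro expectation_01) (simp add: power_le_one)
  have var: "measure_pmf.expectation ?M (\<lambda>x. (W x)\<^sup>2) \<ge> (measure_pmf.expectation ?M W)\<^sup>2"
    using measure_pmf.variance_eq[OF intW intW2] measure_pmf.variance_positive[of ?M W] by simp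
  have pw: "L x \<ge> (W x)\<^sup>2 / 2" if x: "x \<in> set_pmf ?M" for x
  proof -
    have x1: "x 0 \<ge> 1" using offspring_pos[OF pos x] N0 by auto
    have SN: "total N x \<ge> N" using offspring_pos[OF pos x] by (rule total_ge)
    have xS: "x 0 \<le> total N x" unfolding total_def using N0 by (intro member_le_sum) auto
    show ?thesis
    proof (cases "x 0 \<ge> 2")
      case True
      hence "W x = real (x 0) / real (total N x)" unfolding W_def Z_def by simp
      moreover have "(real (x 0) / real (total N x))\<^sup>2 / 2 \<le> L x"
        unfolding L_def using True SN N2 xS by (intro real_ineq) auto
      ultimately show ?thesis by simp
    next
      case False
      hence "W x = 0" unfolding W_def by simp
      moreover have "L x \<ge> 0" unfolding L_def using x1 SN N2 by (intro divide_nonneg_nonneg mult_nonneg_nonneg) auto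
      ultimately show ?thesis by simp
    qed
  qed
  have L01: "0 \<le> L x \<and> L x \<le> 1" if x: "x \<in> set_pmf ?M" for x
  proof -
    have x1: "x 0 \<ge> 1" using offspring_pos[OF pos x] N0 by auto
    have SN: "total N x \<ge> N" using offspring_pos[OF pos x] by (rule total_ge)
    have xS: "x 0 \<le> total N x" unfolding total_def using N0 by (intro member_le_sum) auto
    have "real (x 0) * (real (x 0) - 1) \<le> real (total N x) * (real (total N x) - 1)"
      using x1 xS by (intro mult_mono) auto
    moreover have "real (total N x) * (real (total N x) - 1) > 0" using SN N2 by simp
    moreover have "0 \<le> real (x 0) * (real (x 0) - 1)" using x1 by simp
    ultimately show ?thesis unfolding L_def by (simp add: divide_simps)
  qed
  have intL: "integrable (measure_pmf ?M) L" using L01 by (rule expectation_01)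
  have EL: "measure_pmf.expectation ?M L \<ge> measure_pmf.expectation ?M (\<lambda>x. (W x)\<^sup>2) / 2"
  proof -
    have "measure_pmf.expectation ?M (\<lambda>x. (W x)\<^sup>2 / 2) \<le> measure_pmf.expectation ?M L"
      using pw intL intW2 by (intro integral_mono_AE) (auto simp: AE_measure_pmf_iff)
    thus ?thesis by simp
  qed
  have "cN p N = real N * measure_pmf.expectation ?M L"
    unfolding L_def by (rule part2[OF pos N2])
  also have "\<dots> \<ge> real N * ((q / real N)\<^sup>2 / 2)"
  proof (intro mult_left_mono)
    have "(q / real N)\<^sup>2 \<le> (measure_pmf.expectation ?M W)\<^sup>2"
      using EWq q0 by (intro power_mono) auto
    thus "(q / real N)\<^sup>2 / 2 \<le> measure_pmf.expectation ?M L" using var EL by simp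
  qed simp
  finally show ?thesis using N0 unfolding q_def by (simp add: power2_eq_square field_simps)
qed


theorem lemma2p2:
  fixes p :: "nat pmf" and N :: nat
  assumes pos: "set_pmf p \<subseteq> {1..}"
  shows "(\<forall>(r::nat) (k::nat \<Rightarrow> nat). (\<forall>i<r. k i \<ge> 2) \<and> N > (\<Sum>i<r. k i) \<longrightarrow>
            measure_pmf.expectation (cannings_pmf p N)
              (\<lambda>(x, A). \<Prod>i<r. ffac (real (nu A i)) (k i))
            / ffac (real N) (\<Sum>i<r. k i)
          = measure_pmf.expectation (offspring_pmf p N)
              (\<lambda>x. (\<Prod>i<r. ffac (real (x i)) (k i)) / ffac (real (total N x)) (\<Sum>i<r. k i)))
       \<and> (N > 2 \<longrightarrow>
            cN p N = real N * measure_pmf.expectation (offspring_pmf p N)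
              (\<lambda>x. real (x 0) * (real (x 0) - 1) / (real (total N x) * (real (total N x) - 1))))
       \<and> (N > 2 \<longrightarrow> cN p N \<ge> (measure_pmf.prob p {2..})\<^sup>2 / (2 * real N))"
  proof (intro conjI allI impI)
  fix r :: nat and k :: "nat \<Rightarrow> nat"
  assume h: "(\<forall>i<r. k i \<ge> 2) \<and> N > (\<Sum>i<r. k i)"
  show "measure_pmf.expectation (cannings_pmf p N)
              (\<lambda>(x, A). \<Prod>i<r. ffac (real (nu A i)) (k i))
            / ffac (real N) (\<Sum>i<r. k i)
          = measure_pmf.expectation (offspring_pmf p N)
              (\<lambda>x. (\<Prod>i<r. ffac (real (x i)) (k i)) / ffac (real (total N x)) (\<Sum>i<r. k i))"
    using h by (intro part1[OF pos]) auto
next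
  assume "N > 2"
  thus "cN p N = real N * measure_pmf.expectation (offspring_pmf p N)
              (\<lambda>x. real (x 0) * (real (x 0) - 1) / (real (total N x) * (real (total N x) - 1)))"
    by (rule part2[OF pos])
next
  assume "N > 2"
  thus "cN p N \<ge> (measure_pmf.prob p {2..})\<^sup>2 / (2 * real N)"
    by (rule part3[OF pos])
qed

end
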